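(* Let $(x_t)_{t\in\Omega}$ be a continuous frame for an infinite dimensional Hilbert space $H$. Then there exists $x\in H$ such that $(x_t)_{t\in\Omega}$ does not do stable phase retrieval near $x$. Moreover, the set of $x\in H$ such that $(x_t)_{t\in\Omega}$ does not do stable phase retrieval near $x$ is dense in $H$.
   Context: $H$ is a real or complex Hilbert space. A continuous frame $(x_t)_{t\in\Omega}$ over a measure space $(\Omega,\mu)$ (with $t\mapsto\langle x,x_t\rangle$ measurable for each $x$) satisfies $A\|x\|^2\le\int_\Omega|\langle x,x_t\rangle|^2d\mu\le B\|x\|^2$ for all $x\in H$ with $B\ge A>0$; its analysis operator is $\Theta(x)=(\langle x,x_t\rangle)_{t\in\Omega}\in L_2(\Omega)$, $|\Theta x|=(|\langle x,x_t\rangle|)_{t\in\Omega}$. For $x,y$ with $x\neq\lambda y$ for all scalars $|\lambda|=1$, set $\Psi(x,y)=\||\Theta x|-|\Theta y|\|_{L_2(\Omega)}/\min_{|\lambda|=1}\|x-\lambda y\|$. For $C>0$, the frame does $C$-stable phase retrieval near $x$ if $\liminf_{y\to x,\ y\notin\{\lambda x:|\lambda|=1\}} C\,\Psi(x,y)\ge1$, and does stable phase retrieval near $x$ if this holds for some $C>0$. *)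

theory Defs
  imports "HOL-Analysis.Analysis"
begin

text \<open>Generic framework: a Hilbert space H over a scalar field 'k (real or complex),
  given by its inner product ip (linear in the first argument), its scalar
  multiplication sc, and the set U of unimodular scalars.\<close>

definition complex_hilbert :: "(complex \<Rightarrow> 'a::banach \<Rightarrow> 'a) \<Rightarrow> ('a \<Rightarrow> 'a \<Rightarrow> complex) \<Rightarrow> bool" where
  "complex_hilbert sc ip \<longleftrightarrow>
     (\<forall>a x y. sc a (x + y) = sc a x + sc a y) \<and>
     (\<forall>a b x. sc (a + b) x = sc a x + sc b x) \<and>
     (\<forall>a b x. sc (a * b) x = sc a (sc b x)) \<and>
     (\<forall>x. sc 1 x = x) \<and>
     (\<forall>r x. sc (complex_of_real r) x = r *\<^sub>R x) \<and>
     (\<forall>x y z. ip (x + y) z = ip x z + ip y z) \<and>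
     (\<forall>c x y. ip (sc c x) y = c * ip x y) \<and>
     (\<forall>x y. ip y x = cnj (ip x y)) \<and>
     (\<forall>x. ip x x = complex_of_real ((norm x)\<^sup>2))"

definition infinite_dim :: "('k \<Rightarrow> 'a::real_vector \<Rightarrow> 'a) \<Rightarrow> bool" where
  "infinite_dim sc \<longleftrightarrow>
     (\<forall>S::'a set. finite S \<longrightarrow> (\<exists>v. \<forall>c. v \<noteq> (\<Sum>s\<in>S. sc (c s) s)))"

definition continuous_frame ::
  "'m measure \<Rightarrow> ('a::real_normed_vector \<Rightarrow> 'a \<Rightarrow> 'k::{real_normed_field,second_countable_topology}) \<Rightarrow> ('m \<Rightarrow> 'a) \<Rightarrow> bool" where
  "continuous_frame M ip xf \<longleftrightarrow>
     (\<forall>y. (\<lambda>t. ip y (xf t)) \<in> borel_measurable M) \<and>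
     (\<exists>A B. 0 < A \<and> A \<le> B \<and>
        (\<forall>y. ennreal (A * (norm y)\<^sup>2) \<le> (\<integral>\<^sup>+ t. ennreal ((norm (ip y (xf t)))\<^sup>2) \<partial>M) \<and>
             (\<integral>\<^sup>+ t. ennreal ((norm (ip y (xf t)))\<^sup>2) \<partial>M) \<le> ennreal (B * (norm y)\<^sup>2)))"

definition phase_dist :: "('k \<Rightarrow> 'a::real_normed_vector \<Rightarrow> 'a) \<Rightarrow> 'k set \<Rightarrow> 'a \<Rightarrow> 'a \<Rightarrow> real" where
  "phase_dist sc U x y = Inf ((\<lambda>l. norm (x - sc l y)) ` U)"

definition abs_analysis_dist ::
  "'m measure \<Rightarrow> ('a \<Rightarrow> 'a \<Rightarrow> 'k::real_normed_field) \<Rightarrow> ('m \<Rightarrow> 'a) \<Rightarrow> 'a \<Rightarrow> 'a \<Rightarrow> real" where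
  "abs_analysis_dist M ip xf x y =
     sqrt (enn2real (\<integral>\<^sup>+ t. ennreal ((norm (ip x (xf t)) - norm (ip y (xf t)))\<^sup>2) \<partial>M))"

definition Psi ::
  "'m measure \<Rightarrow> ('a::real_normed_vector \<Rightarrow> 'a \<Rightarrow> 'k::real_normed_field) \<Rightarrow> ('k \<Rightarrow> 'a \<Rightarrow> 'a) \<Rightarrow> 'k set
     \<Rightarrow> ('m \<Rightarrow> 'a) \<Rightarrow> 'a \<Rightarrow> 'a \<Rightarrow> real" where
  "Psi M ip sc U xf x y = abs_analysis_dist M ip xf x y / phase_dist sc U x y"

definition C_stable_PR_near ::
  "'m measure \<Rightarrow> ('a::real_normed_vector \<Rightarrow> 'a \<Rightarrow> 'k::real_normed_field) \<Rightarrow> ('k \<Rightarrow> 'a \<Rightarrow> 'a) \<Rightarrow> 'k set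
     \<Rightarrow> ('m \<Rightarrow> 'a) \<Rightarrow> real \<Rightarrow> 'a \<Rightarrow> bool" where
  "C_stable_PR_near M ip sc U xf C x \<longleftrightarrow>
     Liminf (at x within - ((\<lambda>l. sc l x) ` U)) (\<lambda>y. ereal (C * Psi M ip sc U xf x y)) \<ge> 1"

definition stable_PR_near ::
  "'m measure \<Rightarrow> ('a::real_normed_vector \<Rightarrow> 'a \<Rightarrow> 'k::real_normed_field) \<Rightarrow> ('k \<Rightarrow> 'a \<Rightarrow> 'a) \<Rightarrow> 'k set
     \<Rightarrow> ('m \<Rightarrow> 'a) \<Rightarrow> 'a \<Rightarrow> bool" where
  "stable_PR_near M ip sc U xf x \<longleftrightarrow> (\<exists>C>0. C_stable_PR_near M ip sc U xf C x)"

end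

theory Submission
  imports Defs
begin


lemma summable_norm_cancel_c:
  fixes f :: "nat \<Rightarrow> 'a::{real_normed_vector,complete_space}"
  assumes s: "summable (\<lambda>n. norm (f n))" shows "summable f"
proof -
  have "Cauchy (\<lambda>n. \<Sum>i<n. f i)"
  proof (rule CauchyI)
    fix e :: real assume e: "0 < e"
    obtain N where N: "\<And>m n. m \<ge> N \<Longrightarrow> norm (\<Sum>i\<in>{m..<n}. norm (f i)) < e"
      using s e unfolding summable_Cauchy by blast
    have "norm ((\<Sum>i<m. f i) - (\<Sum>i<n. f i)) < e" if "m \<ge> N" "n \<ge> N" for m n
    proof (cases "m \<le> n")
      case True
      have "norm ((\<Sum>i<m. f i) - (\<Sum>i<n. f i)) = norm (\<Sum>i\<in>{m..<n}. f i)"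
        using True by (simp add: sum_diff_nat_ivl[symmetric, of 0 m n] atLeast0LessThan norm_minus_commute)
      also have "\<dots> \<le> (\<Sum>i\<in>{m..<n}. norm (f i))" by (rule norm_sum)
      also have "\<dots> < e" using N[OF that(1), of n] by simp
      finally show ?thesis .
    next
      case False
      have "norm ((\<Sum>i<m. f i) - (\<Sum>i<n. f i)) = norm (\<Sum>i\<in>{n..<m}. f i)"
        using False by (simp add: sum_diff_nat_ivl[symmetric, of 0 n m] atLeast0LessThan)
      also have "\<dots> \<le> (\<Sum>i\<in>{n..<m}. norm (f i))" by (rule norm_sum)
      also have "\<dots> < e" using N[OF that(2), of m] by simp
      finally show ?thesis .
    qed
    then show "\<exists>M. \<forall>m\<ge>M. \<forall>n\<ge>M. norm ((\<Sum>i<m. f i) - (\<Sum>i<n. f i)) < e" by blast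
  qed
  then show ?thesis by (simp add: summable_iff_convergent Cauchy_convergent)
qed

lemma norm_suminf_le_c:
  fixes f :: "nat \<Rightarrow> 'a::{real_normed_vector,complete_space}"
  assumes le: "\<And>n. norm (f n) \<le> g n" and g: "summable g"
  shows "norm (suminf f) \<le> suminf g"
proof -
  have "summable (\<lambda>n. norm (f n))"
    by (rule summable_comparison_test[OF _ g]) (use le in auto)
  then have sf: "summable f" by (rule summable_norm_cancel_c)
  have "(\<lambda>n. norm (\<Sum>i<n. f i)) \<longlonglongrightarrow> norm (suminf f)"
    by (intro tendsto_norm summable_LIMSEQ sf)
  moreover have "norm (\<Sum>i<n. f i) \<le> suminf g" for n
  proof -
    have "norm (\<Sum>i<n. f i) \<le> (\<Sum>i<n. g i)"
      by (rule order_trans[OF norm_sum sum_mono[OF le]])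
    also have "\<dots> \<le> suminf g"
      using g le by (intro sum_le_suminf) (auto intro: order_trans[OF norm_ge_zero])
    finally show ?thesis .
  qed
  ultimately show ?thesis by (intro LIMSEQ_le_const2) auto
qed

locale hsp =
  fixes sc :: "'k::{real_normed_field,second_countable_topology} \<Rightarrow> 'a::{real_normed_vector,complete_space} \<Rightarrow> 'a" and ip :: "'a \<Rightarrow> 'a \<Rightarrow> 'k" and cj :: "'k \<Rightarrow> 'k"
  assumes sc_add: "sc a (x + y) = sc a x + sc a y"
  and sc_add2: "sc (a + b) x = sc a x + sc b x"
  and sc_mult: "sc (a * b) x = sc a (sc b x)"
  and sc_one: "sc 1 x = x"
  and sc_real: "sc (of_real r) x = r *\<^sub>R x"
  and ip_add: "ip (x + y) z = ip x z + ip y z"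
  and ip_sc: "ip (sc c x) y = c * ip x y"
  and ip_sym: "ip y x = cj (ip x y)"
  and ip_norm: "ip x x = of_real ((norm x)\<^sup>2)"
  and cj_add: "cj (a + b) = cj a + cj b"
  and cj_mult: "cj (a * b) = cj a * cj b"
  and cj_of_real: "cj (of_real r) = of_real r"
  and cj_cj: "cj (cj a) = a"
  and mult_cj: "a * cj a = of_real ((norm a)\<^sup>2)"
begin

lemma cj_zero[simp]: "cj 0 = 0"
  using cj_add[of 0 0] by simp

lemma cj_minus: "cj (- a) = - cj a"
  using cj_add[of a "-a"] by (simp add: eq_neg_iff_add_eq_0 add.commute)

lemma cj_diff: "cj (a - b) = cj a - cj b"
  using cj_add[of a "-b"] cj_minus[of b] by simp

lemma cj_sum: "cj (\<Sum>i\<in>A. f i) = (\<Sum>i\<in>A. cj (f i))"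
  by (induction A rule: infinite_finite_induct) (auto simp: cj_add)

lemma norm_cj: "norm (cj a) = norm a"
proof -
  have "of_real ((norm a)\<^sup>2) = (of_real ((norm (cj a))\<^sup>2) :: 'k)"
    using mult_cj[of a] mult_cj[of "cj a"] cj_cj[of a] by (simp add: mult.commute)
  then have "(norm a)\<^sup>2 = (norm (cj a))\<^sup>2" using of_real_eq_iff by blast
  then show ?thesis by (simp add: power2_eq_iff_nonneg)
qed

lemma ip_zero[simp]: "ip 0 z = 0"
  using ip_add[of 0 0 z] by simp

lemma ip_minus: "ip (- x) z = - ip x z"
  using ip_add[of x "-x" z] by (simp add: eq_neg_iff_add_eq_0 add.commute)

lemma ip_diff: "ip (x - y) z = ip x z - ip y z"
  using ip_add[of x "-y" z] ip_minus[of y z] by simp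

lemma ip_scaleR: "ip (r *\<^sub>R x) z = of_real r * ip x z"
  using ip_sc[of "of_real r" x z] sc_real by simp

lemma ip_add_r: "ip z (x + y) = ip z x + ip z y"
  using ip_sym[of z "x+y"] ip_add[of x y z] cj_add ip_sym by metis

lemma ip_zero_r[simp]: "ip z 0 = 0"
  using ip_sym[of z 0] by simp

lemma ip_diff_r: "ip z (x - y) = ip z x - ip z y"
  by (metis cj_diff ip_diff ip_sym)

lemma ip_sc_r: "ip x (sc c y) = cj c * ip x y"
  by (metis cj_mult ip_sc ip_sym)

lemma ip_scaleR_r: "ip x (r *\<^sub>R y) = of_real r * ip x y"
  using ip_sc_r[of x "of_real r" y] sc_real cj_of_real by simp

lemma ip_sum: "ip (\<Sum>i\<in>A. f i) z = (\<Sum>i\<in>A. ip (f i) z)"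
  by (induction A rule: infinite_finite_induct) (auto simp: ip_add)

lemma ip_sum_r: "ip z (\<Sum>i\<in>A. f i) = (\<Sum>i\<in>A. ip z (f i))"
  by (induction A rule: infinite_finite_induct) (auto simp: ip_add_r)

lemma sc_zero[simp]: "sc a 0 = 0"
  using sc_add[of a 0 0] by simp

lemma sc_minus: "sc a (- x) = - sc a x"
  using sc_add[of a x "-x"] by (simp add: eq_neg_iff_add_eq_0 add.commute)

lemma sc_diff: "sc a (x - y) = sc a x - sc a y"
  using sc_add[of a x "-y"] sc_minus[of a y] by simp

lemma norm_sc: "norm (sc a x) = norm a * norm x"
proof -
  have "ip (sc a x) (sc a x) = a * cj a * ip x x"
    by (simp add: ip_sc ip_sc_r mult.assoc mult.left_commute)
  also have "\<dots> = of_real ((norm a * norm x)\<^sup>2)"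
    by (simp add: mult_cj ip_norm power_mult_distrib)
  finally have "of_real ((norm (sc a x))\<^sup>2) = (of_real ((norm a * norm x)\<^sup>2) :: 'k)"
    by (simp add: ip_norm)
  then have "(norm (sc a x))\<^sup>2 = (norm a * norm x)\<^sup>2" using of_real_eq_iff by blast
  then show ?thesis by (simp add: power2_eq_iff_nonneg)
qed

lemma pythag:
  assumes "ip a b = 0"
  shows "(norm (a + b))\<^sup>2 = (norm a)\<^sup>2 + (norm b)\<^sup>2"
proof -
  have "ip b a = 0" using assms ip_sym[of b a] by simp
  then have "ip (a + b) (a + b) = ip a a + ip b b"
    using assms by (simp add: ip_add ip_add_r)
  then have "(of_real ((norm (a+b))\<^sup>2) :: 'k) = of_real ((norm a)\<^sup>2 + (norm b)\<^sup>2)"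
    by (simp add: ip_norm)
  then show ?thesis using of_real_eq_iff by blast
qed

lemma bessel:
  fixes e :: "nat \<Rightarrow> 'a"
  assumes on: "\<And>i j. i < N \<Longrightarrow> j < N \<Longrightarrow> ip (e i) (e j) = (if i = j then 1 else 0)"
  shows "(\<Sum>i<N. (norm (ip z (e i)))\<^sup>2) \<le> (norm z)\<^sup>2"
proof -
  define a where "a i = ip z (e i)" for i
  define s where "s = (\<Sum>i<N. (norm (a i))\<^sup>2)"
  define w where "w = (\<Sum>i<N. sc (a i) (e i))"
  have e1: "ip w (e j) = a j" if "j < N" for j
  proof -
    have "ip w (e j) = (\<Sum>i<N. a i * ip (e i) (e j))"
      by (simp add: w_def ip_sum ip_sc)
    also have "\<dots> = (\<Sum>i<N. if i = j then a i else 0)"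
      by (rule sum.cong) (auto simp: on that)
    also have "\<dots> = a j" using that by simp
    finally show ?thesis .
  qed
  have wz: "ip w z = of_real s"
  proof -
    have "ip w z = (\<Sum>i<N. a i * cj (a i))"
      by (simp add: w_def ip_sum ip_sc a_def ip_sym[of "e _" z])
    then show ?thesis by (simp add: mult_cj s_def)
  qed
  have zw: "ip z w = of_real s" using wz ip_sym[of z w] cj_of_real by simp
  have ww: "ip w w = of_real s"
  proof -
    have "ip w w = (\<Sum>i<N. a i * ip (e i) w)"
      by (simp add: w_def[of ] ip_sum ip_sc)
    also have "\<dots> = (\<Sum>i<N. a i * cj (a i))"
      by (rule sum.cong) (auto simp: ip_sym[of "e _" w] e1)
    finally show ?thesis by (simp add: mult_cj s_def)
  qed
  have "ip (z - w) (z - w) = ip z z - ip w z - (ip z w - ip w w)" by (simp add: ip_diff ip_diff_r)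
  also have "\<dots> = of_real ((norm z)\<^sup>2 - s)" by (simp only: wz zw ww ip_norm[of z] of_real_diff) simp
  finally have "of_real ((norm (z - w))\<^sup>2) = (of_real ((norm z)\<^sup>2 - s) :: 'k)" by (simp only: ip_norm)
  then have "(norm (z - w))\<^sup>2 = (norm z)\<^sup>2 - s" using of_real_eq_iff by blast
  then have "s \<le> (norm z)\<^sup>2" by (smt (verit) zero_le_power2)
  then show ?thesis by (simp add: s_def a_def)
qed

lemma weak_null:
  fixes e :: "nat \<Rightarrow> 'a"
  assumes on: "\<And>i j. ip (e i) (e j) = (if i = j then 1 else 0)"
  shows "(\<lambda>i. ip z (e i)) \<longlonglongrightarrow> 0"
proof -
  have "summable (\<lambda>i. (norm (ip z (e i)))\<^sup>2)"
  proof (rule bounded_imp_summable)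
    fix n
    have "(\<Sum>k\<le>n. (norm (ip z (e k)))\<^sup>2) = (\<Sum>k<Suc n. (norm (ip z (e k)))\<^sup>2)"
      by (simp add: lessThan_Suc_atMost)
    also have "\<dots> \<le> (norm z)\<^sup>2" by (rule bessel) (simp add: on)
    finally show "(\<Sum>k\<le>n. (norm (ip z (e k)))\<^sup>2) \<le> (norm z)\<^sup>2" .
  qed simp
  then have "(\<lambda>i. (norm (ip z (e i)))\<^sup>2) \<longlonglongrightarrow> 0" by (rule summable_LIMSEQ_zero)
  then have "(\<lambda>i. sqrt ((norm (ip z (e i)))\<^sup>2)) \<longlonglongrightarrow> sqrt 0"
    by (rule tendsto_real_sqrt)
  then have "(\<lambda>i. norm (ip z (e i))) \<longlonglongrightarrow> 0" by simp
  then show ?thesis by (simp add: tendsto_norm_zero_iff)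
qed

lemma unit_ip: "norm v = 1 \<Longrightarrow> ip v v = 1"
  by (simp add: ip_norm)

lemma exists_ortho:
  fixes f :: "nat \<Rightarrow> 'a"
  assumes inf: "infinite_dim sc"
  and on: "\<And>i j. i < n \<Longrightarrow> j < n \<Longrightarrow> ip (f i) (f j) = (if i = j then 1 else 0)"
  shows "\<exists>u. norm u = 1 \<and> (\<forall>j<n. ip u (f j) = 0)"
proof -
  have inj: "inj_on f {..<n}"
  proof (rule inj_onI)
    fix i j assume "i \<in> {..<n}" "j \<in> {..<n}" "f i = f j"
    then show "i = j" using on[of i j] on[of i i] by (metis lessThan_iff one_neq_zero)
  qed
  obtain v where v: "\<And>c. v \<noteq> (\<Sum>s\<in>f ` {..<n}. sc (c s) s)"
    using inf unfolding infinite_dim_def by blast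
  define w where "w = v - (\<Sum>i<n. sc (ip v (f i)) (f i))"
  have "(\<Sum>i<n. sc (ip v (f i)) (f i)) = (\<Sum>s\<in>f ` {..<n}. sc (ip v s) s)"
    using sum.reindex[OF inj, of "\<lambda>s. sc (ip v s) s"] by simp
  then have wnz: "w \<noteq> 0" using v[of "\<lambda>s. ip v s"] by (simp add: w_def)
  have wo: "ip w (f j) = 0" if "j < n" for j
  proof -
    have "ip w (f j) = ip v (f j) - (\<Sum>i<n. ip v (f i) * ip (f i) (f j))"
      by (simp add: w_def ip_diff ip_sum ip_sc)
    also have "(\<Sum>i<n. ip v (f i) * ip (f i) (f j)) = (\<Sum>i<n. if i = j then ip v (f i) else 0)"
      by (rule sum.cong) (auto simp: on that)
    also have "\<dots> = ip v (f j)" using that by simp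
    finally show ?thesis by simp
  qed
  define u where "u = (1 / norm w) *\<^sub>R w"
  have "norm u = 1" using wnz by (simp add: u_def)
  moreover have "\<forall>j<n. ip u (f j) = 0" by (simp add: u_def ip_scaleR wo)
  ultimately show ?thesis by blast
qed

lemma ortho_seq:
  assumes inf: "infinite_dim sc" and e0: "norm e0 = 1"
  shows "\<exists>e::nat \<Rightarrow> 'a. e 0 = e0 \<and> (\<forall>i j. ip (e i) (e j) = (if i = j then 1 else 0))"
proof -
  define P where "P n f \<longleftrightarrow> (f 0 = e0 \<and> (\<forall>i\<le>n. \<forall>j\<le>n. ip (f i) (f j) = (if i = j then 1 else 0)))"
    for n and f :: "nat \<Rightarrow> 'a"
  define Q where "Q n f g \<longleftrightarrow> (\<forall>i\<le>n. g i = (f i :: 'a))" for n :: nat and f g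
  have "\<exists>F. \<forall>n. P n (F n) \<and> Q n (F n) (F (Suc n))"
  proof (rule dependent_nat_choice)
    show "\<exists>x. P 0 x" by (rule exI[of _ "\<lambda>_. e0"]) (simp add: P_def unit_ip e0)
  next
    fix f n assume Pf: "P n f"
    obtain v where v: "norm v = 1" "\<forall>j<Suc n. ip v (f j) = 0"
      using exists_ortho[OF inf, of "Suc n" f] Pf unfolding P_def by (meson less_Suc_eq_le)
    have v2: "ip (f j) v = 0" if "j \<le> n" for j
      using v(2) that ip_sym[of "f j" v] by simp
    define g where "g = f(Suc n := v)"
    have "P (Suc n) g"
      unfolding P_def
    proof (intro conjI allI impI)
      show "g 0 = e0" using Pf by (simp add: g_def P_def)
      fix i j assume "i \<le> Suc n" "j \<le> Suc n"
      then show "ip (g i) (g j) = (if i = j then 1 else 0)"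
        using Pf v v2 unfolding P_def g_def
        by (cases "i = Suc n"; cases "j = Suc n") (auto simp: unit_ip le_Suc_eq)
    qed
    moreover have "Q n f g" by (simp add: Q_def g_def)
    ultimately show "\<exists>y. P (Suc n) y \<and> Q n f y" by blast
  qed
  then obtain F where F: "\<And>n. P n (F n)" "\<And>n. Q n (F n) (F (Suc n))" by blast
  have stab: "F m i = F i i" if "i \<le> m" for i m
    using that
  proof (induction m)
    case 0 then show ?case by simp
  next
    case (Suc m)
    show ?case
    proof (cases "i = Suc m")
      case False
      then have "i \<le> m" using Suc.prems by simp
      then show ?thesis using Suc.IH F(2)[of m] by (simp add: Q_def)
    qed simp
  qed
  define e where "e n = F n n" for n
  have "e 0 = e0" using F(1)[of 0] by (simp add: e_def P_def)
  moreover have "ip (e i) (e j) = (if i = j then 1 else 0)" for i j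
  proof -
    have "e i = F (max i j) i" "e j = F (max i j) j"
      using stab[of i "max i j"] stab[of j "max i j"] by (simp_all add: e_def)
    then show ?thesis using F(1)[of "max i j"] unfolding P_def by simp
  qed
  ultimately show ?thesis by blast
qed

end



lemma prefix_choice:
  fixes R :: "nat \<Rightarrow> (nat \<Rightarrow> 'b) \<Rightarrow> 'b \<Rightarrow> bool"
  assumes ex: "\<And>n f. \<exists>v. R n f v"
  and cong: "\<And>n f g v. (\<And>i. i < n \<Longrightarrow> f i = g i) \<Longrightarrow> R n f v \<Longrightarrow> R n g v"
  shows "\<exists>F. \<forall>n. R n F (F n)"
proof -
  obtain pick where pick: "\<And>n f. R n f (pick n f)" using ex by metis
  define G where "G = rec_nat (\<lambda>_. undefined) (\<lambda>n g. g(n := pick n g))"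
  have G0: "G 0 = (\<lambda>_. undefined)" and GS: "\<And>n. G (Suc n) = (G n)(n := pick n (G n))"
    by (simp_all add: G_def)
  have stab: "G n i = G (Suc i) i" if "i < n" for n i
    using that
  proof (induction n)
    case 0 then show ?case by simp
  next
    case (Suc n)
    then show ?case by (cases "i = n") (auto simp: GS)
  qed
  define F where "F n = G (Suc n) n" for n
  have "R n F (F n)" for n
  proof -
    have "R n (G n) (pick n (G n))" by (rule pick)
    moreover have "F n = pick n (G n)" by (simp add: F_def GS)
    moreover have "G n i = F i" if "i < n" for i
      unfolding F_def by (rule stab[OF that])
    ultimately show ?thesis
      by (intro cong[of n "G n" F]) auto
  qed
  then show ?thesis by blast
qed

lemma Liminf_filter_antimono:
  assumes "F \<le> G" shows "Liminf G f \<le> Liminf F f"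
  unfolding Liminf_def using assms
  by (auto intro!: SUP_subset_mono dest: filter_leD)

context hsp begin

lemma min_to_zero:
  fixes M :: "'m measure" and xf :: "'m \<Rightarrow> 'a" and e :: "nat \<Rightarrow> 'a"
  assumes meas: "\<And>y. (\<lambda>t. ip y (xf t)) \<in> borel_measurable M"
  and on: "\<And>i j. ip (e i) (e j) = (if i = j then 1 else 0)"
  and g: "g \<in> borel_measurable M" "\<And>t. g t \<ge> 0" "(\<integral>\<^sup>+ t. ennreal ((g t)\<^sup>2) \<partial>M) < \<infinity>"
  and a: "a \<ge> 0"
  shows "(\<lambda>m. \<integral>\<^sup>+ t. ennreal ((min (g t) (a * norm (ip (e m) (xf t))))\<^sup>2) \<partial>M) \<longlonglongrightarrow> 0"
proof -
  have [measurable]: "\<And>y. (\<lambda>t. ip y (xf t)) \<in> borel_measurable M" "g \<in> borel_measurable M"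
    using meas g by auto
  have "(\<lambda>m. \<integral>\<^sup>+ t. ennreal ((min (g t) (a * norm (ip (e m) (xf t))))\<^sup>2) \<partial>M) \<longlonglongrightarrow> (\<integral>\<^sup>+ t. 0 \<partial>M)"
  proof (rule nn_integral_dominated_convergence[where w="\<lambda>t. ennreal ((g t)\<^sup>2)"])
    show "(\<integral>\<^sup>+ t. ennreal ((g t)\<^sup>2) \<partial>M) < \<infinity>" using g by simp
  next
    fix j
    show "AE t in M. ennreal ((min (g t) (a * norm (ip (e j) (xf t))))\<^sup>2) \<le> ennreal ((g t)\<^sup>2)"
      using g(2) a by (intro AE_I2 ennreal_leI power_mono) auto
  next
    show "AE t in M. (\<lambda>m. ennreal ((min (g t) (a * norm (ip (e m) (xf t))))\<^sup>2)) \<longlonglongrightarrow> 0"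
    proof (rule AE_I2)
      fix t
      have "(\<lambda>m. ip (xf t) (e m)) \<longlonglongrightarrow> 0" by (rule weak_null) (simp add: on)
      then have "(\<lambda>m. norm (ip (xf t) (e m))) \<longlonglongrightarrow> 0" by (simp add: tendsto_norm_zero_iff)
      then have "(\<lambda>m. norm (ip (e m) (xf t))) \<longlonglongrightarrow> 0"
        by (simp add: ip_sym[of "e _" "xf t"] norm_cj)
      then have "(\<lambda>m. (min (g t) (a * norm (ip (e m) (xf t))))\<^sup>2) \<longlonglongrightarrow> (min (g t) (a * 0))\<^sup>2"
        by (intro tendsto_intros)
      then have "(\<lambda>m. ennreal ((min (g t) (a * norm (ip (e m) (xf t))))\<^sup>2)) \<longlonglongrightarrow> ennreal ((min (g t) (a * 0))\<^sup>2)"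
        by (rule tendsto_ennrealI)
      then show "(\<lambda>m. ennreal ((min (g t) (a * norm (ip (e m) (xf t))))\<^sup>2)) \<longlonglongrightarrow> 0"
        using g(2)[of t] by simp
    qed
  qed auto
  then show ?thesis by simp
qed

lemma sc_diff2: "sc (a - b) x = sc a x - sc b x"
  using sc_add2[of "a - b" b x] by (simp add: eq_diff_eq)

lemma phase_lb:
  assumes ab: "ip a b = 0" and nb: "norm b \<le> norm a" and l: "norm l = 1"
  shows "2 * norm b \<le> norm ((a + b) - sc l (a - b))"
proof -
  have eq: "(a + b) - sc l (a - b) = sc (1 - l) a + sc (1 + l) b"
    by (simp add: sc_diff sc_diff2 sc_add2 sc_one algebra_simps)
  have o: "ip (sc (1 - l) a) (sc (1 + l) b) = 0"
    by (simp add: ip_sc ip_sc_r ab)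
  have cj1: "cj 1 = 1" using cj_of_real[of 1] by simp
  have "(of_real ((norm (1 - l))\<^sup>2 + (norm (1 + l))\<^sup>2) :: 'k) = (1 - l) * cj (1 - l) + (1 + l) * cj (1 + l)"
    by (simp add: mult_cj)
  also have "\<dots> = 2 + 2 * (l * cj l)"
    by (simp add: cj_diff cj_add cj1 algebra_simps)
  also have "\<dots> = of_real 4" by (simp add: mult_cj l)
  finally have s4: "(norm (1 - l))\<^sup>2 + (norm (1 + l))\<^sup>2 = 4" using of_real_eq_iff by blast
  have "(norm ((a + b) - sc l (a - b)))\<^sup>2 = (norm (1 - l) * norm a)\<^sup>2 + (norm (1 + l) * norm b)\<^sup>2"
    unfolding eq using pythag[OF o] by (simp add: norm_sc)
  also have "\<dots> \<ge> (norm (1 - l) * norm b)\<^sup>2 + (norm (1 + l) * norm b)\<^sup>2"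
    using nb by (intro add_mono power_mono mult_left_mono) auto
  finally have X: "(norm (1 - l) * norm b)\<^sup>2 + (norm (1 + l) * norm b)\<^sup>2 \<le> (norm ((a + b) - sc l (a - b)))\<^sup>2" .
  have "(norm (1 - l) * norm b)\<^sup>2 + (norm (1 + l) * norm b)\<^sup>2 = ((norm (1 - l))\<^sup>2 + (norm (1 + l))\<^sup>2) * (norm b)\<^sup>2"
    by (simp add: power_mult_distrib algebra_simps)
  also have "\<dots> = (2 * norm b)\<^sup>2" using s4 by (simp add: power_mult_distrib)
  finally have "(2 * norm b)\<^sup>2 \<le> (norm ((a + b) - sc l (a - b)))\<^sup>2" using X by simp
  then show ?thesis by (rule power2_le_imp_le) simp
qed

lemma sq_sum_le: fixes a b :: real shows "(a + b)\<^sup>2 \<le> 2 * a\<^sup>2 + 2 * b\<^sup>2"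
proof -
  have "0 \<le> (a - b)\<^sup>2" by simp
  then show ?thesis by (simp add: power2_eq_square algebra_simps)
qed

lemma pointwise_bound:
  fixes p q s :: "'k"
  shows "(norm (p + s + q) - norm (p + s - q))\<^sup>2 \<le> 8 * (min (norm p) (norm q))\<^sup>2 + 8 * (norm s)\<^sup>2"
proof -
  have a: "\<bar>norm (p + s + q) - norm (p + s - q)\<bar> \<le> 2 * norm q"
    using norm_triangle_ineq[of "p + s - q" "2*q"] norm_triangle_ineq[of "p + s + q" "-2*q"]
    by (auto simp: algebra_simps norm_mult abs_le_iff)
  have b: "\<bar>norm (p + s + q) - norm (p + s - q)\<bar> \<le> 2 * norm p + 2 * norm s"
  proof -
    have "norm (p + s + q) \<le> norm (q - (p + s)) + norm (2 * (p + s))"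
      using norm_triangle_ineq[of "q - (p+s)" "2*(p+s)"] by (simp add: algebra_simps)
    moreover have "norm (q - (p + s)) \<le> norm (2 * (p + s)) + norm (p + s + q)"
      using norm_triangle_ineq4[of "p + s + q" "2*(p+s)"] by (simp add: algebra_simps)
    moreover have "norm (2 * (p + s)) \<le> 2 * norm p + 2 * norm s"
      using norm_triangle_ineq[of p s] norm_mult[of "2::'k" "p+s"] by simp
    moreover have "norm (p + s - q) = norm (q - (p + s))" by (simp add: norm_minus_commute)
    ultimately show ?thesis by linarith
  qed
  have "\<bar>norm (p + s + q) - norm (p + s - q)\<bar> \<le> 2 * min (norm p) (norm q) + 2 * norm s"
    using a b norm_ge_zero[of s] unfolding min_def by (smt (verit))
  then have "(norm (p + s + q) - norm (p + s - q))\<^sup>2 \<le> (2 * min (norm p) (norm q) + 2 * norm s)\<^sup>2"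
    by (metis abs_ge_zero power2_abs power_mono)
  also have "\<dots> \<le> 8 * (min (norm p) (norm q))\<^sup>2 + 8 * (norm s)\<^sup>2"
    using sq_sum_le[of "2 * min (norm p) (norm q)" "2 * norm s"] by (simp add: power_mult_distrib)
  finally show ?thesis .
qed

end



context hsp begin

lemma c_facts:
  fixes r :: real
  assumes r: "r > 0"
  defines "c \<equiv> \<lambda>k::nat. r * (1/2)^k / fact k"
  shows c_pos: "\<And>k. c k > 0"
    and c_suc: "\<And>k. c (Suc k) = c k / (2 * (real k + 1))"
    and c_dec: "\<And>j k. j \<le> k \<Longrightarrow> c k \<le> c j"
    and c_geo: "\<And>k j. c (j + k) \<le> c k * (1/2)^j"
    and c_sum: "summable c" "suminf c \<le> 2 * r"
    and c_tail: "\<And>n. summable (\<lambda>j. c (j + Suc n))" "\<And>n. (\<Sum>j. c (j + Suc n)) \<le> c n / (real n + 1)"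
proof -
  show cp: "c k > 0" for k using r by (simp add: c_def)
  show cs: "c (Suc k) = c k / (2 * (real k + 1))" for k
    by (simp add: c_def field_simps)
  have cs2: "c (Suc k) \<le> c k / 2" for k
  proof -
    have nn: "real k * (2 * c (Suc k)) \<ge> 0" using cp[of "Suc k"] by simp
    have "2 * c (Suc k) + real k * (2 * c (Suc k)) = c k" using cs[of k] cp[of k] by (simp add: field_simps)
    then show ?thesis using nn by linarith
  qed
  show cg: "c (j + k) \<le> c k * (1/2)^j" for k j
  proof (induction j)
    case (Suc j)
    have "c (Suc j + k) \<le> c (j + k) / 2" using cs2[of "j + k"] by simp
    also have "\<dots> \<le> c k * (1/2)^j / 2" using Suc by simp
    finally show ?case by simp
  qed simp
  show "c k \<le> c j" if "j \<le> k" for j k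
  proof -
    define d where "d = k - j"
    have "k = d + j" using that by (simp add: d_def)
    then have "c k \<le> c j * (1/2)^d" using cg by simp
    also have "\<dots> \<le> c j" using cp[of j] by (simp add: mult_left_le power_le_one)
    finally show ?thesis .
  qed
  have sg: "summable (\<lambda>k. r * (1/2)^k)" by (simp add: summable_mult)
  have le: "c k \<le> r * (1/2)^k" for k using cg[of k 0] by (simp add: c_def)
  show sc: "summable c"
  proof (rule summable_comparison_test'[OF sg, where N=0])
    fix n :: nat
    show "norm (c n) \<le> r * (1/2)^n" using le[of n] cp[of n] by simp
  qed
  have "suminf c \<le> (\<Sum>k. r * (1/2)^k)" by (rule suminf_le[OF le sc sg])
  also have "\<dots> = 2 * r" by (simp add: suminf_mult suminf_geometric)
  finally show "suminf c \<le> 2 * r" .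
  fix n
  show st: "summable (\<lambda>j. c (j + Suc n))" using sc by (rule summable_ignore_initial_segment)
  have sg2: "summable (\<lambda>j. c (Suc n) * (1/2)^j)" by (simp add: summable_mult)
  have "(\<Sum>j. c (j + Suc n)) \<le> (\<Sum>j. c (Suc n) * (1/2)^j)"
    by (rule suminf_le[OF cg st sg2])
  also have "\<dots> = 2 * c (Suc n)" by (simp add: suminf_mult suminf_geometric)
  also have "\<dots> = c n / (real n + 1)" using cs[of n] by (simp add: field_simps)
  finally show "(\<Sum>j. c (j + Suc n)) \<le> c n / (real n + 1)" .
qed

end



context hsp begin

theorem dense_unstable:
  fixes M :: "'m measure" and xf :: "'m \<Rightarrow> 'a" and x0 :: 'a
  assumes inf: "infinite_dim sc" and fr: "continuous_frame M ip xf" and eps: "\<epsilon> > 0"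
  shows "\<exists>x. dist x x0 < \<epsilon> \<and> \<not> stable_PR_near M ip sc {l. norm l = 1} xf x"
proof -
  obtain A B where meas[measurable]: "\<And>y. (\<lambda>t. ip y (xf t)) \<in> borel_measurable M"
    and AB: "0 < A" "A \<le> B"
    and upper: "\<And>y. (\<integral>\<^sup>+ t. ennreal ((norm (ip y (xf t)))\<^sup>2) \<partial>M) \<le> ennreal (B * (norm y)\<^sup>2)"
    using fr unfolding continuous_frame_def by blast
  have Bpos: "B > 0" using AB by simp
  obtain u0 :: 'a where u0: "norm u0 = 1"
    using exists_ortho[OF inf, of 0 "\<lambda>_. 0"] by auto
  define e0 where "e0 = (if x0 = 0 then u0 else (1 / norm x0) *\<^sub>R x0)"
  have e0n: "norm e0 = 1" using u0 by (simp add: e0_def)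
  obtain e :: "nat \<Rightarrow> 'a" where e0: "e 0 = e0" and on: "\<And>i j. ip (e i) (e j) = (if i = j then 1 else 0)"
    using ortho_seq[OF inf e0n] by blast
  have x0o: "ip x0 (e m) = 0" if "m \<ge> 1" for m
  proof (cases "x0 = 0")
    case False
    then have "x0 = norm x0 *\<^sub>R e 0" by (simp add: e0 e0_def)
    then have "ip x0 (e m) = of_real (norm x0) * ip (e 0) (e m)" by (metis ip_scaleR)
    then show ?thesis using that on[of 0 m] by simp
  qed simp
  define r where "r = \<epsilon> / 4"
  have r: "r > 0" using eps by (simp add: r_def)
  define c where "c = (\<lambda>k::nat. r * (1/2)^k / fact k)"
  have cf1: "\<And>k. c k > 0" using c_facts(1)[OF r] by (simp add: c_def)
  have cf3: "\<And>j k. j \<le> k \<Longrightarrow> c k \<le> c j" using c_facts(3)[OF r] by (simp add: c_def)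
  have cf5: "summable c" using c_facts(5)[OF r] by (simp add: c_def)
  have cf6: "suminf c \<le> 2 * r" using c_facts(6)[OF r] by (simp add: c_def)
  have cf7: "\<And>n. summable (\<lambda>j. c (j + Suc n))" using c_facts(7)[OF r] by (simp add: c_def)
  have cf8: "\<And>n. (\<Sum>j. c (j + Suc n)) \<le> c n / (real n + 1)" using c_facts(8)[OF r] by (simp add: c_def)
  note cf = cf1 cf1 cf3 cf3 cf5 cf6 cf7 cf8
  define hd where "hd n f = x0 + (\<Sum>k<n. c k *\<^sub>R e (f k))" for n and f :: "nat \<Rightarrow> nat"
  define R where "R n f v \<longleftrightarrow> (1 \<le> v \<and> (\<Sum>i<n. f i) < v \<and>
      (\<integral>\<^sup>+ t. ennreal ((min (norm (ip (hd n f) (xf t))) (c n * norm (ip (e v) (xf t))))\<^sup>2) \<partial>M)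
        \<le> ennreal ((c n / (real n + 1))\<^sup>2))" for n f v
  have "\<exists>m. \<forall>n. R n m (m n)"
  proof (rule prefix_choice)
    fix n f
    have lim: "(\<lambda>v. \<integral>\<^sup>+ t. ennreal ((min (norm (ip (hd n f) (xf t))) (c n * norm (ip (e v) (xf t))))\<^sup>2) \<partial>M) \<longlonglongrightarrow> 0"
    proof (rule min_to_zero[OF meas on])
      show "(\<integral>\<^sup>+ t. ennreal ((norm (ip (hd n f) (xf t)))\<^sup>2) \<partial>M) < \<infinity>"
        using upper[of "hd n f"] by (simp add: top.not_eq_extremum order_le_less_trans)
    qed (use cf in \<open>auto intro: less_imp_le\<close>)
    have pos: "(0::ennreal) < ennreal ((c n / (real n + 1))\<^sup>2)"
      using cf(1)[of n] by simp
    have ev: "eventually (\<lambda>v. R n f v) sequentially"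
    proof -
      have "eventually (\<lambda>v. (\<integral>\<^sup>+ t. ennreal ((min (norm (ip (hd n f) (xf t))) (c n * norm (ip (e v) (xf t))))\<^sup>2) \<partial>M)
          < ennreal ((c n / (real n + 1))\<^sup>2)) sequentially"
        using order_tendstoD(2)[OF lim pos] .
      moreover have "eventually (\<lambda>v. Suc (\<Sum>i<n. f i) \<le> v) sequentially"
        by (rule eventually_ge_at_top)
      ultimately show ?thesis
        by eventually_elim (auto simp: R_def less_imp_le)
    qed
    then show "\<exists>v. R n f v" using eventually_happens'[OF sequentially_bot] by blast
  next
    fix n f g v
    assume fg: "\<And>i. i < n \<Longrightarrow> f i = g i" and Rf: "R n f v"
    have "hd n f = hd n g" unfolding hd_def using fg by (auto intro!: sum.cong)
    moreover have "(\<Sum>i<n. f i) = (\<Sum>i<n. g i)" using fg by (auto intro!: sum.cong)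
    ultimately show "R n g v" using Rf unfolding R_def by simp
  qed
  then obtain m where m: "\<And>n. R n m (m n)" by blast
  have m1: "m n \<ge> 1" for n using m[of n] by (simp add: R_def)
  have mlt: "m i < m j" if "i < j" for i j
  proof -
    have "m i \<le> (\<Sum>k<j. m k)" using that by (intro member_le_sum) auto
    also have "\<dots> < m j" using m[of j] by (simp add: R_def)
    finally show ?thesis .
  qed
  have minj: "m i = m j \<longleftrightarrow> i = j" for i j
    using mlt[of i j] mlt[of j i] by (cases i j rule: linorder_cases) auto
  define h where "h k = e (m k)" for k
  have hon: "ip (h i) (h j) = (if i = j then 1 else 0)" for i j
    by (simp add: h_def on minj)
  have hn: "norm (h k) = 1" for k
  proof -
    have "(of_real ((norm (h k))\<^sup>2) :: 'k) = of_real 1" using hon[of k k] by (simp add: ip_norm)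
    then have "(norm (h k))\<^sup>2 = 1\<^sup>2" using of_real_eq_iff by (metis power_one)
    then show ?thesis using power2_eq_imp_eq[of "norm (h k)" 1] by simp
  qed
  have x0h: "ip x0 (h k) = 0" for k using x0o m1 by (simp add: h_def)
  have hdm: "hd n m = x0 + (\<Sum>k<n. c k *\<^sub>R h k)" for n by (simp add: hd_def h_def)
  define S where "S k = c k *\<^sub>R h k" for k
  have nS: "norm (S k) = c k" for k using cf(1)[of k] by (simp add: S_def hn)
  have sumS: "summable S" by (rule summable_norm_cancel_c) (simp add: nS cf(5))
  define x where "x = x0 + suminf S"
  have "dist x x0 = norm (suminf S)" by (simp add: x_def dist_norm)
  also have "\<dots> \<le> suminf c" by (rule norm_suminf_le_c) (simp_all add: nS cf(5))
  also have "\<dots> < \<epsilon>" using cf(6) r eps by (simp add: r_def)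
  finally have dx: "dist x x0 < \<epsilon>" .
  define U where "U = {l::'k. norm l = 1}"
  define y where "y n = x - (2 * c n) *\<^sub>R h n" for n
  define K where "K = sqrt (8 * (1 + B))"
  define P where "P N = x0 + (\<Sum>k<N. S k)" for N
  have PL: "P \<longlonglongrightarrow> x"
    unfolding P_def x_def by (intro tendsto_add tendsto_const summable_LIMSEQ sumS)
  have P1: "2 * c n \<le> norm (x - sc l (y n))" if n1: "n \<ge> 1" and l: "norm l = 1" for n l
  proof -
    define w where "w = (2 * c n) *\<^sub>R h n"
    have lb: "2 * c n \<le> norm (P N - sc l (P N - w))" if N: "N > n" for N
    proof -
      define a where "a = x0 + (\<Sum>k\<in>{..<N} - {n}. S k)"
      have PN: "P N = a + S n"
        using N by (simp add: P_def a_def sum.remove[of "{..<N}" n])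
      have ah: "ip a (h n) = 0"
      proof -
        have "ip a (h n) = ip x0 (h n) + (\<Sum>k\<in>{..<N} - {n}. of_real (c k) * ip (h k) (h n))"
          by (simp add: a_def ip_add ip_sum S_def ip_scaleR)
        also have "\<dots> = 0" by (simp add: x0h hon)
        finally show ?thesis .
      qed
      have ab: "ip a (S n) = 0" by (simp add: S_def ip_scaleR_r ah)
      have ah0: "ip a (h 0) = of_real (c 0)"
      proof -
        have z: "0 \<in> {..<N} - {n}" using n1 N by auto
        have "ip a (h 0) = ip x0 (h 0) + (\<Sum>k\<in>{..<N} - {n}. of_real (c k) * ip (h k) (h 0))"
          by (simp add: a_def ip_add ip_sum S_def ip_scaleR)
        also have "\<dots> = (\<Sum>k\<in>{..<N} - {n}. if k = 0 then of_real (c k) else 0)"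
        proof -
          have "\<And>k. of_real (c k) * ip (h k) (h 0) = (if k = 0 then of_real (c k) else (0::'k))"
            by (simp add: hon)
          then show ?thesis by (simp only: x0h add_0_left)
        qed
        also have "\<dots> = of_real (c 0)" using z by (subst sum.delta) auto
        finally show ?thesis .
      qed
      have "(norm (ip a (h 0)))\<^sup>2 \<le> (norm a)\<^sup>2"
        using bessel[where e="\<lambda>_. h 0" and N=1 and z=a] hon by simp
      then have "(c 0)\<^sup>2 \<le> (norm a)\<^sup>2" using ah0 cf(1)[of 0] by simp
      then have "c 0 \<le> norm a" by (rule power2_le_imp_le) simp
      moreover have "c n \<le> c 0" by (rule cf(3)) simp
      ultimately have nb: "norm (S n) \<le> norm a" by (simp add: nS)
      have "2 * norm (S n) \<le> norm ((a + S n) - sc l (a - S n))"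
        by (rule phase_lb[OF ab nb l])
      moreover have "a - S n = P N - w" using PN by (simp add: w_def S_def algebra_simps flip: scaleR_add_left)
      ultimately show ?thesis using PN by (simp add: nS)
    qed
    have conv: "(\<lambda>N. P N - sc l (P N - w)) \<longlonglongrightarrow> x - sc l (x - w)"
    proof (rule LIM_zero_cancel, rule Lim_null_comparison)
      show "eventually (\<lambda>N. norm (P N - sc l (P N - w) - (x - sc l (x - w))) \<le> 2 * norm (P N - x)) sequentially"
      proof (rule always_eventually, rule allI)
        fix N
        have "P N - sc l (P N - w) - (x - sc l (x - w)) = (P N - x) - sc l (P N - x)"
          by (simp add: sc_diff algebra_simps)
        also have "norm \<dots> \<le> norm (P N - x) + norm (sc l (P N - x))" by (rule norm_triangle_ineq4)
        also have "\<dots> = 2 * norm (P N - x)" by (simp add: norm_sc l)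
        finally show "norm (P N - sc l (P N - w) - (x - sc l (x - w))) \<le> 2 * norm (P N - x)" .
      qed
      have "(\<lambda>N. norm (P N - x)) \<longlonglongrightarrow> 0" using PL by (simp add: LIM_zero tendsto_norm_zero)
      then show "(\<lambda>N. 2 * norm (P N - x)) \<longlonglongrightarrow> 0" by (rule tendsto_mult_right_zero)
    qed
    have "2 * c n \<le> norm (x - sc l (x - w))"
    proof (rule tendsto_lowerbound[OF tendsto_norm[OF conv]])
      show "eventually (\<lambda>N. 2 * c n \<le> norm (P N - sc l (P N - w))) sequentially"
        using eventually_gt_at_top[of n] by eventually_elim (rule lb)
    qed simp
    then show ?thesis by (simp add: y_def w_def)
  qed
  have PD: "2 * c n \<le> phase_dist sc U x (y n)" if "n \<ge> 1" for n
    unfolding phase_dist_def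
  proof (rule cInf_greatest)
    show "(\<lambda>l. norm (x - sc l (y n))) ` U \<noteq> {}" by (auto simp: U_def intro: exI[of _ 1])
  qed (use P1 that in \<open>auto simp: U_def\<close>)
  have AD: "abs_analysis_dist M ip xf x (y n) \<le> K * (c n / (real n + 1))" for n
  proof -
    define T where "T = (\<Sum>j. S (j + Suc n))"
    have "suminf S = T + (\<Sum>i<Suc n. S i)"
      unfolding T_def by (rule suminf_split_initial_segment[OF sumS])
    then have xeq: "x = hd n m + T + S n" by (simp add: x_def hdm S_def algebra_simps)
    have nT: "norm T \<le> c n / (real n + 1)"
    proof -
      have "norm T \<le> (\<Sum>j. c (j + Suc n))"
        unfolding T_def by (rule norm_suminf_le_c[OF _ cf7]) (simp add: nS)
      also have "\<dots> \<le> c n / (real n + 1)" by (rule cf8)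
      finally show ?thesis .
    qed
    define p where "p t = ip (hd n m) (xf t)" for t
    define s where "s t = ip T (xf t)" for t
    define q where "q t = of_real (c n) * ip (h n) (xf t)" for t
    have ipx: "ip x (xf t) = p t + s t + q t" for t
      by (simp add: xeq ip_add p_def s_def q_def S_def ip_scaleR)
    have ipy: "ip (y n) (xf t) = p t + s t - q t" for t
    proof -
      have "ip (y n) (xf t) = ip x (xf t) - of_real (2 * c n) * ip (h n) (xf t)"
        by (simp add: y_def ip_diff ip_scaleR)
      then show ?thesis by (simp add: ipx q_def algebra_simps)
    qed
    have nq: "norm (q t) = c n * norm (ip (h n) (xf t))" for t
      using cf1[of n] by (simp add: q_def norm_mult)
    have pw: "(norm (ip x (xf t)) - norm (ip (y n) (xf t)))\<^sup>2
        \<le> 8 * (min (norm (p t)) (c n * norm (ip (h n) (xf t))))\<^sup>2 + 8 * (norm (s t))\<^sup>2" for t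
      using pointwise_bound[of "p t" "s t" "q t"] by (simp add: ipx ipy nq)
    have [measurable]: "(\<lambda>t. p t) \<in> borel_measurable M" "(\<lambda>t. s t) \<in> borel_measurable M"
      by (simp_all add: p_def s_def)
    have mint: "(\<integral>\<^sup>+ t. ennreal ((min (norm (p t)) (c n * norm (ip (h n) (xf t))))\<^sup>2) \<partial>M)
        \<le> ennreal ((c n / (real n + 1))\<^sup>2)"
      using m[of n] by (simp add: R_def p_def h_def)
    have sint: "(\<integral>\<^sup>+ t. ennreal ((norm (s t))\<^sup>2) \<partial>M) \<le> ennreal (B * (c n / (real n + 1))\<^sup>2)"
    proof -
      have "(\<integral>\<^sup>+ t. ennreal ((norm (s t))\<^sup>2) \<partial>M) \<le> ennreal (B * (norm T)\<^sup>2)"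
        using upper[of T] by (simp add: s_def)
      also have "\<dots> \<le> ennreal (B * (c n / (real n + 1))\<^sup>2)"
        using nT Bpos by (intro ennreal_leI mult_left_mono power_mono) auto
      finally show ?thesis .
    qed
    define I where "I = (\<integral>\<^sup>+ t. ennreal ((norm (ip x (xf t)) - norm (ip (y n) (xf t)))\<^sup>2) \<partial>M)"
    have "I \<le> (\<integral>\<^sup>+ t. ennreal 8 * ennreal ((min (norm (p t)) (c n * norm (ip (h n) (xf t))))\<^sup>2)
                      + ennreal 8 * ennreal ((norm (s t))\<^sup>2) \<partial>M)"
      unfolding I_def
    proof (rule nn_integral_mono)
      fix t
      have "ennreal ((norm (ip x (xf t)) - norm (ip (y n) (xf t)))\<^sup>2)
          \<le> ennreal (8 * (min (norm (p t)) (c n * norm (ip (h n) (xf t))))\<^sup>2 + 8 * (norm (s t))\<^sup>2)"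
        by (rule ennreal_leI[OF pw])
      also have "\<dots> = ennreal 8 * ennreal ((min (norm (p t)) (c n * norm (ip (h n) (xf t))))\<^sup>2)
                      + ennreal 8 * ennreal ((norm (s t))\<^sup>2)"
        by (simp add: ennreal_mult)
      finally show "ennreal ((norm (ip x (xf t)) - norm (ip (y n) (xf t)))\<^sup>2)
          \<le> ennreal 8 * ennreal ((min (norm (p t)) (c n * norm (ip (h n) (xf t))))\<^sup>2)
                      + ennreal 8 * ennreal ((norm (s t))\<^sup>2)" .
    qed
    also have "\<dots> = ennreal 8 * (\<integral>\<^sup>+ t. ennreal ((min (norm (p t)) (c n * norm (ip (h n) (xf t))))\<^sup>2) \<partial>M)
                    + ennreal 8 * (\<integral>\<^sup>+ t. ennreal ((norm (s t))\<^sup>2) \<partial>M)"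
      by (simp add: nn_integral_add nn_integral_cmult)
    also have "\<dots> \<le> ennreal 8 * ennreal ((c n / (real n + 1))\<^sup>2) + ennreal 8 * ennreal (B * (c n / (real n + 1))\<^sup>2)"
      by (intro add_mono mult_left_mono mint sint) auto
    also have "\<dots> = ennreal (8 * (1 + B) * (c n / (real n + 1))\<^sup>2)"
    proof -
      define a where "a = (c n / (real n + 1))\<^sup>2"
      have a0: "a \<ge> 0" by (simp add: a_def)
      have "ennreal 8 * ennreal a + ennreal 8 * ennreal (B * a) = ennreal (8 * a) + ennreal (8 * (B * a))"
        using a0 Bpos by (simp add: ennreal_mult)
      also have "\<dots> = ennreal (8 * a + 8 * (B * a))"
        using a0 Bpos by (intro ennreal_plus[symmetric]) auto
      also have "8 * a + 8 * (B * a) = 8 * (1 + B) * a" by (simp add: algebra_simps)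
      finally show ?thesis by (simp add: a_def)
    qed
    finally have Ile: "I \<le> ennreal (8 * (1 + B) * (c n / (real n + 1))\<^sup>2)" .
    have "enn2real I \<le> 8 * (1 + B) * (c n / (real n + 1))\<^sup>2"
      using Ile Bpos by (intro enn2real_leI) auto
    then have "sqrt (enn2real I) \<le> sqrt (8 * (1 + B) * (c n / (real n + 1))\<^sup>2)"
      by (rule real_sqrt_le_mono)
    also have "\<dots> = K * (c n / (real n + 1))"
      using cf1[of n] by (simp add: K_def real_sqrt_mult)
    finally show ?thesis by (simp add: abs_analysis_dist_def I_def)
  qed
  have PSI: "Psi M ip sc U xf x (y n) \<le> K / (2 * (real n + 1))" if "n \<ge> 1" for n
  proof -
    have pd: "2 * c n \<le> phase_dist sc U x (y n)" using PD that .
    have cp: "2 * c n > 0" using cf1[of n] by simp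
    have Kn: "K \<ge> 0" by (simp add: K_def Bpos less_imp_le)
    have ad0: "abs_analysis_dist M ip xf x (y n) \<ge> 0" by (simp add: abs_analysis_dist_def)
    have "Psi M ip sc U xf x (y n) \<le> abs_analysis_dist M ip xf x (y n) / (2 * c n)"
      unfolding Psi_def using pd cp ad0 by (intro divide_left_mono) auto
    also have "\<dots> \<le> K * (c n / (real n + 1)) / (2 * c n)"
      using AD[of n] cp by (intro divide_right_mono) auto
    also have "\<dots> = (K * c n) / ((2 * (real n + 1)) * c n)" by (simp add: ac_simps)
    also have "\<dots> = K / (2 * (real n + 1))"
      using cf1[of n] by (intro nonzero_mult_divide_mult_cancel_right) simp
    finally show ?thesis .
  qed
  have notst: "\<not> stable_PR_near M ip sc U xf x"
  proof
    assume "stable_PR_near M ip sc U xf x"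
    then obtain C where C: "C > 0" and st: "Liminf (at x within - ((\<lambda>l. sc l x) ` U)) (\<lambda>z. ereal (C * Psi M ip sc U xf x z)) \<ge> 1"
      unfolding stable_PR_near_def C_stable_PR_near_def by blast
    define Sx where "Sx = - ((\<lambda>l. sc l x) ` U)"
    have yS: "y n \<in> Sx" if "n \<ge> 1" for n
      unfolding Sx_def
    proof (rule ComplI)
      assume "y n \<in> (\<lambda>l. sc l x) ` U"
      then obtain l where l: "norm l = 1" "y n = sc l x" by (auto simp: U_def)
      have l0: "l \<noteq> 0" using l by auto
      have "sc (inverse l) (y n) = x" using l0 by (simp add: l(2) sc_mult[symmetric] sc_one)
      moreover have "norm (inverse l) = 1" using l by (simp add: norm_inverse)
      ultimately have "2 * c n \<le> norm (x - x)" using P1[OF that, of "inverse l"] by simp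
      then show False using cf1[of n] by simp
    qed
    have yx: "y \<longlonglongrightarrow> x"
    proof -
      have "(\<lambda>n. (2 * c n) *\<^sub>R h n) \<longlonglongrightarrow> 0"
      proof (rule Lim_null_comparison)
        show "eventually (\<lambda>n. norm ((2 * c n) *\<^sub>R h n) \<le> 2 * c n) sequentially"
          using cf1 by (simp add: hn less_imp_le)
        show "(\<lambda>n. 2 * c n) \<longlonglongrightarrow> 0"
          using summable_LIMSEQ_zero[OF cf5] by (simp add: tendsto_mult_right_zero)
      qed
      then have "(\<lambda>n. x - (2 * c n) *\<^sub>R h n) \<longlonglongrightarrow> x - 0" by (intro tendsto_diff tendsto_const)
      then show ?thesis by (simp add: y_def[abs_def])
    qed
    have yne: "y n \<noteq> x" if "n \<ge> 1" for n
    proof -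
      have "norm (y n - x) = 2 * c n" using cf1[of n] by (simp add: y_def hn)
      then show ?thesis using cf1[of n] by auto
    qed
    have flim: "filterlim y (at x within Sx) sequentially"
      unfolding filterlim_at
    proof
      show "eventually (\<lambda>n. y n \<in> Sx \<and> y n \<noteq> x) sequentially"
        using eventually_ge_at_top[of 1] by eventually_elim (simp add: yS yne)
    qed (rule yx)
    have "Liminf (at x within Sx) (\<lambda>z. ereal (C * Psi M ip sc U xf x z))
        \<le> Liminf (filtermap y sequentially) (\<lambda>z. ereal (C * Psi M ip sc U xf x z))"
      by (rule Liminf_filter_antimono) (use flim in \<open>simp add: filterlim_def\<close>)
    also have "\<dots> \<le> Liminf sequentially (\<lambda>n. ereal (C * Psi M ip sc U xf x (y n)))"
      by (rule Liminf_filtermap_le)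
    also have "\<dots> \<le> ereal (1/2)"
    proof (rule Liminf_le)
      obtain N :: nat where N: "C * K \<le> real N" using real_arch_simple by blast
      show "eventually (\<lambda>n. ereal (C * Psi M ip sc U xf x (y n)) \<le> ereal (1/2)) sequentially"
        using eventually_ge_at_top[of "N + 1"]
      proof eventually_elim
        case (elim n)
        then have n1: "n \<ge> 1" by simp
        have "C * Psi M ip sc U xf x (y n) \<le> C * (K / (2 * (real n + 1)))"
          using PSI[OF n1] C by (intro mult_left_mono) auto
        also have "\<dots> \<le> 1/2"
        proof -
          have "C * K \<le> real n + 1" using N elim by linarith
          then show ?thesis by (simp add: field_simps)
        qed
        finally show ?case by simp
      qed
    qed simp
    finally have "Liminf (at x within Sx) (\<lambda>z. ereal (C * Psi M ip sc U xf x z)) \<le> ereal (1/2)" .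
    then have "(1::ereal) \<le> ereal (1/2)" using st unfolding Sx_def by (rule order_trans[rotated])
    then show False by (simp add: one_ereal_def)
  qed
  show ?thesis using dx notst by (auto simp: U_def)
qed

end



lemma real_hsp: "hsp (scaleR :: real \<Rightarrow> 'a \<Rightarrow> 'a::{real_inner,complete_space}) inner id"
proof -
  have n: "\<And>x::'a. x \<bullet> x = norm x * norm x" by (metis power2_norm_eq_inner power2_eq_square)
  show ?thesis
    by unfold_locales (auto simp: n inner_add_left inner_add_right inner_commute scaleR_add_right scaleR_add_left power2_eq_square)
qed

lemma complex_hsp:
  fixes sc :: "complex \<Rightarrow> 'b::banach \<Rightarrow> 'b"
  assumes "complex_hilbert sc ip" shows "hsp sc ip cnj"
proof -
  have h: "(\<forall>a x y. sc a (x + y) = sc a x + sc a y) \<and>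
     (\<forall>a b x. sc (a + b) x = sc a x + sc b x) \<and>
     (\<forall>a b x. sc (a * b) x = sc a (sc b x)) \<and>
     (\<forall>x. sc 1 x = x) \<and>
     (\<forall>r x. sc (complex_of_real r) x = r *\<^sub>R x) \<and>
     (\<forall>x y z. ip (x + y) z = ip x z + ip y z) \<and>
     (\<forall>c x y. ip (sc c x) y = c * ip x y) \<and>
     (\<forall>x y. ip y x = cnj (ip x y)) \<and>
     (\<forall>x. ip x x = complex_of_real ((norm x)\<^sup>2))"
    using assms unfolding complex_hilbert_def .
  have h1: "\<And>a b c r x y z. sc a (x + y) = sc a x + sc a y" using h[THEN conjunct1] by simp
  have h2: "\<And>a b c r x y z. sc (a + b) x = sc a x + sc b x" using h[THEN conjunct2, THEN conjunct1] by simp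
  have h3: "\<And>a b c r x y z. sc (a * b) x = sc a (sc b x)" using h[THEN conjunct2, THEN conjunct2, THEN conjunct1] by simp
  have h4: "\<And>a b c r x y z. sc 1 x = x" using h[THEN conjunct2, THEN conjunct2, THEN conjunct2, THEN conjunct1] by simp
  have h5: "\<And>a b c r x y z. sc (complex_of_real r) x = r *\<^sub>R x" using h[THEN conjunct2, THEN conjunct2, THEN conjunct2, THEN conjunct2, THEN conjunct1] by simp
  have h6: "\<And>a b c r x y z. ip (x + y) z = ip x z + ip y z" using h[THEN conjunct2, THEN conjunct2, THEN conjunct2, THEN conjunct2, THEN conjunct2, THEN conjunct1] by simp
  have h7: "\<And>a b c r x y z. ip (sc c x) y = c * ip x y" using h[THEN conjunct2, THEN conjunct2, THEN conjunct2, THEN conjunct2, THEN conjunct2, THEN conjunct2, THEN conjunct1] by simp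
  have h8: "\<And>a b c r x y z. ip y x = cnj (ip x y)" using h[THEN conjunct2, THEN conjunct2, THEN conjunct2, THEN conjunct2, THEN conjunct2, THEN conjunct2, THEN conjunct2, THEN conjunct1] by blast
  have h9: "\<And>a b c r x y z. ip x x = complex_of_real ((norm x)\<^sup>2)" using h[THEN conjunct2, THEN conjunct2, THEN conjunct2, THEN conjunct2, THEN conjunct2, THEN conjunct2, THEN conjunct2, THEN conjunct2] by simp
  show ?thesis
    apply unfold_locales
    apply (fact h1)
    apply (fact h2)
    apply (fact h3)
    apply (fact h4)
    apply (fact h5)
    apply (fact h6)
    apply (fact h7)
    apply (fact h8)
    apply (fact h9)
    apply (simp_all add: complex_norm_square[symmetric])
    done
qed

lemma generic_conclusion:
  fixes sc :: "'k::{real_normed_field,second_countable_topology} \<Rightarrow> 'a::{real_normed_vector,complete_space} \<Rightarrow> 'a"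
  assumes H: "hsp sc ip cj" and inf: "infinite_dim sc" and fr: "continuous_frame M ip xf"
  shows "(\<exists>x. \<not> stable_PR_near M ip sc {l. norm l = 1} xf x) \<and>
         closure {x. \<not> stable_PR_near M ip sc {l. norm l = 1} xf x} = UNIV"
proof
  have d: "\<exists>x. dist x x0 < e \<and> \<not> stable_PR_near M ip sc {l. norm l = 1} xf x" if "e > 0" for x0 e
    using hsp.dense_unstable[OF H inf fr that] .
  show "\<exists>x. \<not> stable_PR_near M ip sc {l. norm l = 1} xf x"
    using d[of 1 0] by auto
  show "closure {x. \<not> stable_PR_near M ip sc {l. norm l = 1} xf x} = UNIV"
  proof (rule set_eqI, rule iffI)
    fix x0 :: 'a
    show "x0 \<in> closure {x. \<not> stable_PR_near M ip sc {l. norm l = 1} xf x}"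
      unfolding closure_approachable using d by blast
  qed simp
qed


theorem theorem5p2:
  shows
  "(\<forall>(M::'m measure) (xf::'m \<Rightarrow> 'a::{real_inner,complete_space}).
      infinite_dim (scaleR :: real \<Rightarrow> 'a \<Rightarrow> 'a) \<and> continuous_frame M inner xf \<longrightarrow>
      (\<exists>x. \<not> stable_PR_near M inner scaleR {l::real. \<bar>l\<bar> = 1} xf x) \<and>
      closure {x. \<not> stable_PR_near M inner scaleR {l::real. \<bar>l\<bar> = 1} xf x} = UNIV)
   \<and>
   (\<forall>(M::'n measure) (sc::complex \<Rightarrow> 'b::banach \<Rightarrow> 'b) (ip::'b \<Rightarrow> 'b \<Rightarrow> complex) (xf::'n \<Rightarrow> 'b).
      complex_hilbert sc ip \<and> infinite_dim sc \<and> continuous_frame M ip xf \<longrightarrow>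
      (\<exists>x. \<not> stable_PR_near M ip sc {l. cmod l = 1} xf x) \<and>
      closure {x. \<not> stable_PR_near M ip sc {l. cmod l = 1} xf x} = UNIV)"
proof (rule conjI; intro allI impI)
  fix M :: "'m measure" and xf :: "'m \<Rightarrow> 'a"
  assume a: "infinite_dim (scaleR :: real \<Rightarrow> 'a \<Rightarrow> 'a) \<and> continuous_frame M inner xf"
  have U: "{l::real. \<bar>l\<bar> = 1} = {l. norm l = 1}" by simp
  show "(\<exists>x. \<not> stable_PR_near M inner scaleR {l::real. \<bar>l\<bar> = 1} xf x) \<and>
      closure {x. \<not> stable_PR_near M inner scaleR {l::real. \<bar>l\<bar> = 1} xf x} = UNIV"
  proof -
    have H: "hsp (scaleR :: real \<Rightarrow> 'a \<Rightarrow> 'a) inner id" by (rule real_hsp)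
    have "(\<exists>x. \<not> stable_PR_near M inner scaleR {l::real. norm l = 1} xf x) \<and>
      closure {x. \<not> stable_PR_near M inner scaleR {l::real. norm l = 1} xf x} = UNIV"
      using generic_conclusion[OF H, of M xf] a by simp
    then show ?thesis unfolding U .
  qed
next
  fix M :: "'n measure" and sc :: "complex \<Rightarrow> 'b \<Rightarrow> 'b" and ip xf
  assume a: "complex_hilbert sc ip \<and> infinite_dim sc \<and> continuous_frame M ip xf"
  show "(\<exists>x. \<not> stable_PR_near M ip sc {l. cmod l = 1} xf x) \<and>
      closure {x. \<not> stable_PR_near M ip sc {l. cmod l = 1} xf x} = UNIV"
  proof -
    have h1: "complex_hilbert sc ip" and h2: "infinite_dim sc" and h3: "continuous_frame M ip xf"
      using a by simp_all
    show ?thesis by (rule generic_conclusion[OF complex_hsp[OF h1] h2 h3])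
  qed
qed



end
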